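(* Let $H$ be a separable Hilbert space, let $L\subset H$ be compact, let $K\subset H$ be a convex self-dual cone and let $v\in K$. Then there is $D>0$ with the following property. For all $a<b$ and all curves $c\in C^2([a,b],L)$ parametrized by arc length with $c'([a,b])\subset v-K$ and $c''([a,b])\subset K$, one has $l(c)\le D$.
   Context: A cone $K$ is self-dual if $K=\{u\in H:\langle u,k\rangle\ge0\ \forall k\in K\}$. $v-K=\{v-k:k\in K\}$. $l(c)$ is the length of $c$. *)

theory Defs
  imports "HOL-Analysis.Analysis"
begin

definition self_dual :: "'a::real_inner set \<Rightarrow> bool" where
  "self_dual K \<longleftrightarrow> K = {u. \<forall>k\<in>K. inner u k \<ge> 0}"

definition curve_length :: "(real \<Rightarrow> 'a::real_normed_vector) \<Rightarrow> real \<Rightarrow> real \<Rightarrow> real" where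
  "curve_length c a b = integral {a..b} (\<lambda>t. norm (vector_derivative c (at t within {a..b})))"

end

theory Submission
  imports Defs
begin

lemma inner_vd:
  "(g has_vector_derivative g') F \<Longrightarrow> ((\<lambda>r. inner (g r) k) has_real_derivative inner g' k) F"
  unfolding has_real_derivative_iff_has_vector_derivative
  by (rule bounded_linear.has_vector_derivative[OF bounded_linear_inner_left])

lemma incr_lemma:
  fixes f :: "real \<Rightarrow> real"
  assumes "a \<le> s" "s \<le> t" "t \<le> b"
    and d: "\<forall>r\<in>{a..b}. (f has_real_derivative f' r) (at r within {a..b})"
    and nn: "\<forall>r\<in>{s..t}. f' r \<ge> 0"
  shows "f s \<le> f t"
proof (rule DERIV_nonneg_imp_increasing_open[OF assms(2)])
  fix x assume x: "s < x" "x < t"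
  then have "x \<in> interior {a..b}" using assms by auto
  then have "at x within {a..b} = at x" by (rule at_within_interior)
  then show "\<exists>y. DERIV f x :> y \<and> y \<ge> 0" using d nn x assms
    by (metis atLeastAtMost_iff less_imp_le order_trans)
next
  have "continuous_on {a..b} f"
    by (rule DERIV_continuous_on) (use d in auto)
  then show "continuous_on {s..t} f"
    by (rule continuous_on_subset) (use assms in auto)
qed

theorem theorem7:
  fixes L K :: "'a::{real_inner, complete_space} set" and v :: 'a
  assumes "separable_space (euclidean :: 'a topology)"
    and "compact L"
    and "convex_cone K" and "self_dual K"
    and "v \<in> K"
  shows "\<exists>D>0. \<forall>(a::real) b (c::real \<Rightarrow> 'a) c' c''.
           a < b
           \<and> (\<forall>t\<in>{a..b}. (c has_vector_derivative c' t) (at t within {a..b}))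
           \<and> (\<forall>t\<in>{a..b}. (c' has_vector_derivative c'' t) (at t within {a..b}))
           \<and> continuous_on {a..b} c''
           \<and> c ` {a..b} \<subseteq> L
           \<and> (\<forall>t\<in>{a..b}. norm (c' t) = 1)
           \<and> c' ` {a..b} \<subseteq> (\<lambda>k. v - k) ` K
           \<and> c'' ` {a..b} \<subseteq> K
           \<longrightarrow> curve_length c a b \<le> D"
proof -
  obtain B where B: "B > 0" "\<forall>x\<in>L. norm x \<le> B"
    using compact_imp_bounded[OF assms(2)] bounded_pos by blast
  define N where "N = nat \<lceil>4 * norm v\<rceil>"
  have N: "4 * norm v \<le> real N" unfolding N_def by linarith
  have memK: "\<And>x. x \<in> K \<longleftrightarrow> (\<forall>k\<in>K. inner x k \<ge> 0)"
    using assms(4) unfolding self_dual_def by blast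
  have KK: "\<And>x y. x \<in> K \<Longrightarrow> y \<in> K \<Longrightarrow> inner x y \<ge> 0" using memK by blast
  show ?thesis
  proof (intro exI[of _ "4 * B * (real N + 1) + 1"] conjI allI impI)
    show "0 < 4 * B * (real N + 1) + 1" using B by (simp add: add_pos_nonneg)
    fix a b :: real and c c' c'' :: "real \<Rightarrow> 'a"
    assume H: "a < b
           \<and> (\<forall>t\<in>{a..b}. (c has_vector_derivative c' t) (at t within {a..b}))
           \<and> (\<forall>t\<in>{a..b}. (c' has_vector_derivative c'' t) (at t within {a..b}))
           \<and> continuous_on {a..b} c''
           \<and> c ` {a..b} \<subseteq> L
           \<and> (\<forall>t\<in>{a..b}. norm (c' t) = 1)
           \<and> c' ` {a..b} \<subseteq> (\<lambda>k. v - k) ` K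
           \<and> c'' ` {a..b} \<subseteq> K"
    then have ab: "a < b"
      and dc: "\<forall>t\<in>{a..b}. (c has_vector_derivative c' t) (at t within {a..b})"
      and dc': "\<forall>t\<in>{a..b}. (c' has_vector_derivative c'' t) (at t within {a..b})"
      and cL: "c ` {a..b} \<subseteq> L"
      and n1: "\<forall>t\<in>{a..b}. norm (c' t) = 1"
      and c'K: "c' ` {a..b} \<subseteq> (\<lambda>k. v - k) ` K"
      and c''K: "c'' ` {a..b} \<subseteq> K" by auto
    define h where "h r = inner (c' r) v" for r
    have step1: "c' t - c' s \<in> K" if st: "a \<le> s" "s \<le> t" "t \<le> b" for s t
    proof -
      have "inner (c' t - c' s) k \<ge> 0" if k: "k \<in> K" for k
      proof -
        have "inner (c' s) k \<le> inner (c' t) k"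
        proof (rule incr_lemma[of a s t b _ "\<lambda>r. inner (c'' r) k"])
          show "\<forall>r\<in>{a..b}. ((\<lambda>r. inner (c' r) k) has_real_derivative inner (c'' r) k) (at r within {a..b})"
            using dc' inner_vd by blast
          show "\<forall>r\<in>{s..t}. 0 \<le> inner (c'' r) k"
          proof
            fix r assume r: "r \<in> {s..t}"
            then have "c'' r \<in> K" using c''K \<open>a \<le> s\<close> \<open>t \<le> b\<close> by auto
            then show "0 \<le> inner (c'' r) k" using KK k by blast
          qed
        qed (use st in auto)
        then show ?thesis by (simp add: inner_diff_left)
      qed
      then show ?thesis using memK by blast
    qed
    have step2: "v - c' s \<in> K" if "a \<le> s" "s \<le> b" for s
    proof -
      have "c' s \<in> (\<lambda>k. v - k) ` K" using c'K that by auto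
      then obtain k where "k \<in> K" "c' s = v - k" by blast
      then show ?thesis by simp
    qed
    have nn: "inner (c' t) (c' t) = 1" if "a \<le> t" "t \<le> b" for t
      using n1 that by (simp add: power2_norm_eq_inner[symmetric])
    have step3: "h t - h s \<ge> 1 - inner (c' s) (c' t)" if "a \<le> s" "s \<le> t" "t \<le> b" for s t
    proof -
      have "inner (c' t - c' s) (v - c' t) \<ge> 0"
        using KK step1[OF that] step2[of t] that by auto
      then show ?thesis using nn[of t] that
        by (simp add: h_def inner_diff_left inner_diff_right inner_commute)
    qed
    have cs: "inner (c' s) (c' t) \<le> 1" if "a \<le> s" "s \<le> t" "t \<le> b" for s t
      using norm_cauchy_schwarz[of "c' s" "c' t"] n1 that by auto
    have hmono: "h s \<le> h t" if "a \<le> s" "s \<le> t" "t \<le> b" for s t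
      using step3[OF that] cs[OF that] by linarith
    have cB: "norm (c t - c s) \<le> 2 * B" if "a \<le> s" "s \<le> b" "a \<le> t" "t \<le> b" for s t
    proof -
      have "c t \<in> L" "c s \<in> L" using cL that by auto
      then have "norm (c t) \<le> B" "norm (c s) \<le> B" using B by auto
      then show ?thesis using norm_triangle_ineq4[of "c t" "c s"] by linarith
    qed
    have base: "t - s \<le> 4 * B" if "a \<le> s" "s \<le> t" "t \<le> b" "h t - h s \<le> 1/2" for s t
    proof -
      define \<phi> where "\<phi> r = inner (c r - c s) (c' s) - (r - s) / 2" for r
      have "\<phi> s \<le> \<phi> t"
      proof (rule incr_lemma[of a s t b _ "\<lambda>r. inner (c' r) (c' s) - 1/2"])
        show "\<forall>r\<in>{a..b}. (\<phi> has_real_derivative inner (c' r) (c' s) - 1/2) (at r within {a..b})"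
        proof
          fix r assume r: "r \<in> {a..b}"
          have "((\<lambda>r. inner (c r) (c' s)) has_real_derivative inner (c' r) (c' s)) (at r within {a..b})"
            using dc r inner_vd by blast
          then have "((\<lambda>r. inner (c r) (c' s) - inner (c s) (c' s) - (r - s) / 2) has_real_derivative
                 inner (c' r) (c' s) - 0 - (1 - 0) / 2) (at r within {a..b})"
            by (intro derivative_intros DERIV_cdivide) auto
          then show "(\<phi> has_real_derivative inner (c' r) (c' s) - 1/2) (at r within {a..b})"
            unfolding \<phi>_def by (simp add: inner_diff_left)
        qed
        show "\<forall>r\<in>{s..t}. 0 \<le> inner (c' r) (c' s) - 1/2"
        proof
          fix r assume r: "r \<in> {s..t}"
          have "h r - h s \<le> h t - h s" using hmono[of r t] r that by auto
          moreover have "h r - h s \<ge> 1 - inner (c' s) (c' r)" using step3[of s r] r that by auto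
          ultimately show "0 \<le> inner (c' r) (c' s) - 1/2" using that(4)
            by (simp add: inner_commute)
        qed
      qed (use that in auto)
      moreover have "\<phi> s = 0" unfolding \<phi>_def by simp
      moreover have "inner (c t - c s) (c' s) \<le> 2 * B"
        using norm_cauchy_schwarz[of "c t - c s" "c' s"] n1 cB[of s t] that by auto
      ultimately show ?thesis unfolding \<phi>_def by (simp add: field_simps)
    qed
    have hcont: "continuous_on {a..b} h"
      unfolding h_def by (rule DERIV_continuous_on) (use dc' inner_vd in blast)
    have ind: "\<forall>s t. a \<le> s \<and> s \<le> t \<and> t \<le> b \<and> h t - h s \<le> (real n + 1) / 2
               \<longrightarrow> t - s \<le> 4 * B * (real n + 1)" for n
    proof (induction n)
      case 0
      then show ?case using base by auto
    next
      case (Suc n)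
      show ?case
      proof (intro allI impI)
        fix s t assume st: "a \<le> s \<and> s \<le> t \<and> t \<le> b \<and> h t - h s \<le> (real (Suc n) + 1) / 2"
        show "t - s \<le> 4 * B * (real (Suc n) + 1)"
        proof (cases "h t - h s \<le> 1/2")
          case True
          then have "t - s \<le> 4 * B" using base st by auto
          moreover have "4 * B * (real (Suc n) + 1) = 4 * B + 4 * B + 4 * B * real n"
            by (simp add: algebra_simps)
          moreover have "0 \<le> 4 * B * real n" using B by simp
          ultimately show ?thesis using B by linarith
        next
          case False
          have "continuous_on {s..t} h" using hcont st by (auto intro: continuous_on_subset)
          then obtain r where r: "s \<le> r" "r \<le> t" "h r = h s + 1/2"
            using IVT'[of h s "h s + 1/2" t] False st by auto
          have "r - s \<le> 4 * B" using base[of s r] r st by auto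
          moreover have "t - r \<le> 4 * B * (real n + 1)" using Suc.IH r st by auto
          ultimately show ?thesis by (simp add: algebra_simps)
        qed
      qed
    qed
    have hb: "\<bar>h r\<bar> \<le> norm v" if "a \<le> r" "r \<le> b" for r
      using Cauchy_Schwarz_ineq2[of "c' r" v] n1 that unfolding h_def by auto
    have "h b - h a \<le> (real N + 1) / 2" using hb[of a] hb[of b] ab N by auto
    then have len: "b - a \<le> 4 * B * (real N + 1)" using ind[of N] ab by auto
    have "curve_length c a b = integral {a..b} (\<lambda>t. 1::real)"
      unfolding curve_length_def
    proof (rule integral_cong)
      fix t assume t: "t \<in> {a..b}"
      have "vector_derivative c (at t within cbox a b) = c' t"
        using vector_derivative_within_cbox[of a b t c "c' t"] ab t dc by auto
      then show "norm (vector_derivative c (at t within {a..b})) = 1" using n1 t by simp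
    qed
    also have "\<dots> = b - a" using ab by simp
    finally show "curve_length c a b \<le> 4 * B * (real N + 1) + 1" using len by simp
  qed
qed

end
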